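(* Consider any FEE problem $(I,O,\succsim_I,\omega)$ and any FTTC mechanism (any rule for choosing the ratio, quota and division matrices at each step). For every step $d\ge 1$ of the procedure such that $O(d)\neq\emptyset$ (so that step $d+1$ is executed and $\overline{O}(d)$ is defined), we have $\overline{O}(d)\subseteq \overline{O}(d-1)$.
   Context: Fractional endowment exchange (FEE) problem: a tuple $(I,O,\succsim_I,\omega)$ where $I$ is a finite set of agents, $O$ a finite set of objects, each agent $i$ has a complete and transitive (possibly non-strict) preference relation $\succsim_i$ over $O$ with asymmetric part $\succ_i$ and symmetric part $\sim_i$, and $\omega=(\omega_{i,o})_{i\in I,o\in O}$ is an endowment matrix with $\omega_{i,o}\in[0,1]$, $\sum_{o\in O}\omega_{i,o}\le 1$ for each $i$, and $q_o=\sum_{i\in I}\omega_{i,o}$ an integer for each $o$. An assignment is a nonnegative matrix $p=(p_{i,o})$ with $\sum_i p_{i,o}\le q_o$ for all $o$ and $\sum_o p_{i,o}\le 1$ for all $i$; $p_i=(p_{i,o})_{o\in O}$ is $i$'s lottery. FTTC (Fractional Top Trading Cycle) on the full preference domain. Initialize $\omega(0)=\omega$, $p(0)=0$, $O(0)=O$. At step $d\ge1$ (with $O(d-1)\ne\emptyset$): (i) Labeling. Put $T_0=O(d-1)$. For $k=1,2,\dots$: let $L_k$ be the set of agents $i\notin L_1\cup\dots\cup L_{k-1}$ for which there exist $o\in T_{k-1}$ and $o'\in O\setminus(T_0\cup\dots\cup T_{k-1})$ with $p_{i,o'}(d-1)>0$ and $o\sim_i o'$; for $i\in L_k$ let $\tilde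 O_i(d-1)$ be the set of all such $o'$ for this $i$, and let $T_k=\bigcup_{i\in L_k}\tilde O_i(d-1)$. Stop at the first $k$ with $L_k=\emptyset$. Set $L(d-1)=\bigcup_k L_k$, $\tilde O(d-1)=\bigcup_{k\ge1}T_k$, $\overline{O}(d-1)=O(d-1)\cup\tilde O(d-1)$, and $\tilde O_i(d-1)=\emptyset$ for $i\notin L(d-1)$. (ii) Pointing. The active agents are $I(d-1)=L(d-1)\cup\{i\in I:\sum_o\omega_{i,o}(d-1)>0\}$. For $i\in I(d-1)$ let $B_i$ be the set of $\succsim_i$-maximal elements of $\overline{O}(d-1)$, let $k_i$ be the least $k\ge0$ with $B_i\cap T_k\ne\emptyset$, and let $A_i(d)=B_i\cap T_{k_i}$. (iii) Trading. The mechanism chooses (possibly depending on the history): a ratio matrix $\lambda(d)=(\lambda_{i,o}(d))_{i\in I(d-1),o\in\overline{O}(d-1)}$, nonnegative, with $\sum_{i\in I(d-1)}\lambda_{i,o}(d)=1$ for each $o\in\overline O(d-1)$, $\lambda_{i,o}(d)>0$ only if $\omega_{i,o}(d-1)>0$ (for $o\in O(d-1)$) and only if $o\in\tilde O_i(d-1)$ (for $o\in\tilde O(d-1)$); a quota matrix $\beta(d)$ on $I(d-1)\times O(d-1)$ with $0\le\beta_{i,o}(d)\le\omega_{i,o}(d-1)$; a division matrix $\gamma(d)$ on $I(d-1)\times\overline O(d-1)$, nonnegative, with $\sum_o\gamma_{i,o}(d)=1$ and $\gamma_{i,o}(d)>0$ only if $o\in A_i(d)$. Let $x^*(d)=(x^*_a(d))_{a\in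 I(d-1)\cup\overline O(d-1)}$ be the maximum (componentwise largest) nonnegative solution of $x_o=\sum_{i\in I(d-1)}\gamma_{i,o}(d)x_i$ for all $o\in\overline O(d-1)$ and $x_i=\sum_{o\in\overline O(d-1)}\lambda_{i,o}(d)x_o$ for all $i\in I(d-1)$, subject to $\lambda_{i,o}(d)x_o\le\beta_{i,o}(d)$ for $o\in O(d-1)$ and $\lambda_{i,o}(d)x_o\le p_{i,o}(d-1)$ for $o\in\tilde O(d-1)$. For $i\in I(d-1)$: $\omega_{i,o}(d)=\omega_{i,o}(d-1)-\lambda_{i,o}(d)x^*_o(d)$ if $o\in O(d-1)$ and $0$ otherwise; $p_{i,o}(d)=p_{i,o}(d-1)-\mathbf 1[o\in\tilde O_i(d-1)]\lambda_{i,o}(d)x^*_o(d)+\gamma_{i,o}(d)x^*_i(d)$ (with $\gamma_{i,o}(d)=0$ for $o\notin\overline O(d-1)$). For $i\notin I(d-1)$, $\omega_i(d)=\omega_i(d-1)$, $p_i(d)=p_i(d-1)$. Let $O(d)=\{o\in O(d-1):\sum_i\omega_{i,o}(d)>0\}$. If $O(d)=\emptyset$ stop and output $p(d)$; otherwise go to step $d+1$. (Standing assumption: the maximum solution exists at each step and the procedure ends after finitely many steps.) An FTTC mechanism is specified by a rule choosing $\lambda(d),\beta(d),\gamma(d)$ at every step. *)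

theory Defs
  imports Complex_Main
begin

text \<open>Preferences: R i a b means a \<succsim>_i b.  Agents Ag, objects Obj (finite carrier sets).
  Matrices are functions 'i => 'o => real, only their values on the relevant index sets matter.\<close>

definition indiff :: "('i \<Rightarrow> 'o \<Rightarrow> 'o \<Rightarrow> bool) \<Rightarrow> 'i \<Rightarrow> 'o \<Rightarrow> 'o \<Rightarrow> bool" where
  "indiff R i a b \<longleftrightarrow> R i a b \<and> R i b a"

definition fee_problem ::
  "'i set \<Rightarrow> 'o set \<Rightarrow> ('i \<Rightarrow> 'o \<Rightarrow> 'o \<Rightarrow> bool) \<Rightarrow> ('i \<Rightarrow> 'o \<Rightarrow> real) \<Rightarrow> bool" where
  "fee_problem Ag Obj R \<omega> \<longleftrightarrow>
     finite Ag \<and> finite Obj \<and>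
     (\<forall>i\<in>Ag. (\<forall>a\<in>Obj. \<forall>b\<in>Obj. R i a b \<or> R i b a) \<and>
              (\<forall>a\<in>Obj. \<forall>b\<in>Obj. \<forall>c\<in>Obj. R i a b \<longrightarrow> R i b c \<longrightarrow> R i a c)) \<and>
     (\<forall>i\<in>Ag. \<forall>ob\<in>Obj. 0 \<le> \<omega> i ob \<and> \<omega> i ob \<le> 1) \<and>
     (\<forall>i\<in>Ag. (\<Sum>ob\<in>Obj. \<omega> i ob) \<le> 1) \<and>
     (\<forall>ob\<in>Obj. (\<Sum>i\<in>Ag. \<omega> i ob) \<in> \<int>)"

text \<open>Labeling.  lab ... k = (L_k, T_k, L_1 \<union> ... \<union> L_k, T_0 \<union> ... \<union> T_k), with T_0 = Oc = O(d-1),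
  P = p(d-1).  (Once L_k is empty, all later L, T are empty, so unions over all k agree with
  stopping at the first empty L_k.)\<close>

fun lab :: "'i set \<Rightarrow> 'o set \<Rightarrow> ('i \<Rightarrow> 'o \<Rightarrow> 'o \<Rightarrow> bool) \<Rightarrow> ('i \<Rightarrow> 'o \<Rightarrow> real) \<Rightarrow> 'o set
            \<Rightarrow> nat \<Rightarrow> 'i set \<times> 'o set \<times> 'i set \<times> 'o set" where
  "lab Ag Obj R P Oc 0 = ({}, Oc, {}, Oc)"
| "lab Ag Obj R P Oc (Suc k) = (case lab Ag Obj R P Oc k of (L, T, LU, TU) \<Rightarrow>
     (let L' = {i \<in> Ag - LU. \<exists>ob\<in>T. \<exists>o'\<in>Obj - TU. P i o' > 0 \<and> indiff R i ob o'};
          T' = (\<Union>i\<in>L'. {o' \<in> Obj - TU. P i o' > 0 \<and> (\<exists>ob\<in>T. indiff R i ob o')})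
      in (L', T', LU \<union> L', TU \<union> T')))"

definition layerL where "layerL Ag Obj R P Oc k = fst (lab Ag Obj R P Oc k)"
definition layerT where "layerT Ag Obj R P Oc k = fst (snd (lab Ag Obj R P Oc k))"

text \<open>The set tilde O_i computed at level k+1 (used for i in L_{k+1}).\<close>
definition otil_lvl where
  "otil_lvl Ag Obj R P Oc k i = (case lab Ag Obj R P Oc k of (L, T, LU, TU) \<Rightarrow>
      {o' \<in> Obj - TU. P i o' > 0 \<and> (\<exists>ob\<in>T. indiff R i ob o')})"

definition labeled where
  "labeled Ag Obj R P Oc = (\<Union>k. layerL Ag Obj R P Oc (Suc k))"

definition otil_agent where
  "otil_agent Ag Obj R P Oc i =
     (\<Union>k. if i \<in> layerL Ag Obj R P Oc (Suc k) then otil_lvl Ag Obj R P Oc k i else {})"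

definition otil where
  "otil Ag Obj R P Oc = (\<Union>k. layerT Ag Obj R P Oc (Suc k))"

definition obar where
  "obar Ag Obj R P Oc = Oc \<union> otil Ag Obj R P Oc"

definition active where
  "active Ag Obj R W P Oc = labeled Ag Obj R P Oc \<union> {i \<in> Ag. (\<Sum>ob\<in>Obj. W i ob) > 0}"

definition maxset where
  "maxset R Ob i = {ob \<in> Ob. \<forall>o'\<in>Ob. R i ob o'}"

definition pointA where
  "pointA Ag Obj R P Oc i =
     (let B = maxset R (obar Ag Obj R P Oc) i;
          k = (LEAST k. B \<inter> layerT Ag Obj R P Oc k \<noteq> {})
      in B \<inter> layerT Ag Obj R P Oc k)"

definition trade_feasible where
  "trade_feasible Iact Ob Oc Ot lam beta gam P xa xo \<longleftrightarrow>
     (\<forall>i\<in>Iact. xa i \<ge> 0) \<and> (\<forall>ob\<in>Ob. xo ob \<ge> 0) \<and>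
     (\<forall>ob\<in>Ob. xo ob = (\<Sum>i\<in>Iact. gam i ob * xa i)) \<and>
     (\<forall>i\<in>Iact. xa i = (\<Sum>ob\<in>Ob. lam i ob * xo ob)) \<and>
     (\<forall>i\<in>Iact. \<forall>ob\<in>Oc. lam i ob * xo ob \<le> beta i ob) \<and>
     (\<forall>i\<in>Iact. \<forall>ob\<in>Ot. lam i ob * xo ob \<le> P i ob)"

definition trade_max where
  "trade_max Iact Ob Oc Ot lam beta gam P xa xo \<longleftrightarrow>
     trade_feasible Iact Ob Oc Ot lam beta gam P xa xo \<and>
     (\<forall>ya yo. trade_feasible Iact Ob Oc Ot lam beta gam P ya yo \<longrightarrow>
        (\<forall>i\<in>Iact. ya i \<le> xa i) \<and> (\<forall>ob\<in>Ob. yo ob \<le> xo ob))"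

text \<open>One step d: from (W, P, Oc) = (omega(d-1), p(d-1), O(d-1)) with choices
  lam, beta, gam and the maximum solution (xa, xo) to (W', P', Oc') = (omega(d), p(d), O(d)).\<close>
definition fttc_step where
  "fttc_step Ag Obj R W P Oc lam beta gam xa xo W' P' Oc' \<longleftrightarrow>
    (let Ot = otil Ag Obj R P Oc; Ob = obar Ag Obj R P Oc;
         Iact = active Ag Obj R W P Oc in
     (\<forall>ob\<in>Ob. (\<Sum>i\<in>Iact. lam i ob) = 1) \<and>
     (\<forall>i\<in>Iact. \<forall>ob\<in>Ob. lam i ob \<ge> 0) \<and>
     (\<forall>i\<in>Iact. \<forall>ob\<in>Oc. lam i ob > 0 \<longrightarrow> W i ob > 0) \<and>
     (\<forall>i\<in>Iact. \<forall>ob\<in>Ot. lam i ob > 0 \<longrightarrow> ob \<in> otil_agent Ag Obj R P Oc i) \<and>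
     (\<forall>i\<in>Iact. \<forall>ob\<in>Oc. 0 \<le> beta i ob \<and> beta i ob \<le> W i ob) \<and>
     (\<forall>i\<in>Iact. \<forall>ob\<in>Ob. gam i ob \<ge> 0) \<and>
     (\<forall>i\<in>Iact. (\<Sum>ob\<in>Ob. gam i ob) = 1) \<and>
     (\<forall>i\<in>Iact. \<forall>ob\<in>Ob. gam i ob > 0 \<longrightarrow> ob \<in> pointA Ag Obj R P Oc i) \<and>
     trade_max Iact Ob Oc Ot lam beta gam P xa xo \<and>
     (\<forall>i\<in>Ag. \<forall>ob\<in>Obj. W' i ob =
        (if i \<in> Iact then (if ob \<in> Oc then W i ob - lam i ob * xo ob else 0) else W i ob)) \<and>
     (\<forall>i\<in>Ag. \<forall>ob\<in>Obj. P' i ob =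
        (if i \<in> Iact then
           P i ob - (if ob \<in> otil_agent Ag Obj R P Oc i then lam i ob * xo ob else 0)
                 + (if ob \<in> Ob then gam i ob * xa i else 0)
         else P i ob)) \<and>
     Oc' = {ob \<in> Oc. (\<Sum>i\<in>Ag. W' i ob) > 0})"

text \<open>A run of an FTTC mechanism: sequences omega(d), p(d), O(d) together with the
  choices made at every step d = Suc d0 (executed iff O(d0) is nonempty); after the
  procedure stops, O stays empty.\<close>
definition fttc_run where
  "fttc_run Ag Obj R \<omega> W P Oseq lam beta gam xa xo \<longleftrightarrow>
     W 0 = \<omega> \<and> P 0 = (\<lambda>_ _. 0) \<and> Oseq 0 = Obj \<and>
     (\<forall>d. Oseq d \<noteq> {} \<longrightarrow>
        fttc_step Ag Obj R (W d) (P d) (Oseq d) (lam (Suc d)) (beta (Suc d)) (gam (Suc d))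
          (xa (Suc d)) (xo (Suc d)) (W (Suc d)) (P (Suc d)) (Oseq (Suc d))) \<and>
     (\<forall>d. Oseq d = {} \<longrightarrow> Oseq (Suc d) = {})"

end

theory Submission imports Defs begin

definition LUf where "LUf Ag Obj R P Oc k = fst (snd (snd (lab Ag Obj R P Oc k)))"
definition TUf where "TUf Ag Obj R P Oc k = snd (snd (snd (lab Ag Obj R P Oc k)))"

lemma lab0: "layerL Ag Obj R P Oc 0 = {}" "layerT Ag Obj R P Oc 0 = Oc"
  "LUf Ag Obj R P Oc 0 = {}" "TUf Ag Obj R P Oc 0 = Oc"
  by (simp_all add: layerL_def layerT_def LUf_def TUf_def)

lemma labS:
  "layerL Ag Obj R P Oc (Suc k) = {i \<in> Ag - LUf Ag Obj R P Oc k. \<exists>ob\<in>layerT Ag Obj R P Oc k.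
      \<exists>o'\<in>Obj - TUf Ag Obj R P Oc k. P i o' > 0 \<and> indiff R i ob o'}"
  "layerT Ag Obj R P Oc (Suc k) = (\<Union>i\<in>layerL Ag Obj R P Oc (Suc k).
      {o' \<in> Obj - TUf Ag Obj R P Oc k. P i o' > 0 \<and> (\<exists>ob\<in>layerT Ag Obj R P Oc k. indiff R i ob o')})"
  "LUf Ag Obj R P Oc (Suc k) = LUf Ag Obj R P Oc k \<union> layerL Ag Obj R P Oc (Suc k)"
  "TUf Ag Obj R P Oc (Suc k) = TUf Ag Obj R P Oc k \<union> layerT Ag Obj R P Oc (Suc k)"
  "otil_lvl Ag Obj R P Oc k i = {o' \<in> Obj - TUf Ag Obj R P Oc k. P i o' > 0 \<and> (\<exists>ob\<in>layerT Ag Obj R P Oc k. indiff R i ob o')}"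
  by (cases "lab Ag Obj R P Oc k"; simp add: layerL_def layerT_def LUf_def TUf_def otil_lvl_def Let_def)+

lemma TU_eq: "TUf Ag Obj R P Oc k = Oc \<union> (\<Union>j<k. layerT Ag Obj R P Oc (Suc j))"
  by (induction k) (auto simp: lab0 labS(4) lessThan_Suc)

lemma obar_iff: "x \<in> obar Ag Obj R P Oc \<longleftrightarrow> (\<exists>k. x \<in> TUf Ag Obj R P Oc k)"
  unfolding obar_def otil_def TU_eq by blast

lemma TU_T: "x \<in> TUf Ag Obj R P Oc k \<Longrightarrow> \<exists>j. x \<in> layerT Ag Obj R P Oc j"
  unfolding TU_eq using lab0(2)[of Ag Obj R P Oc] by blast

lemma LU_L: "i \<in> LUf Ag Obj R P Oc k \<Longrightarrow> \<exists>j. i \<in> layerL Ag Obj R P Oc (Suc j)"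
  by (induction k) (auto simp: lab0 labS(3))

lemma T_sub_TU: "layerT Ag Obj R P Oc k \<subseteq> TUf Ag Obj R P Oc k"
  by (cases k) (auto simp: lab0 labS(4))

lemma T_sub_obar: "layerT Ag Obj R P Oc k \<subseteq> obar Ag Obj R P Oc"
  using T_sub_TU obar_iff by fast

lemma TU_sub_obar: "TUf Ag Obj R P Oc k \<subseteq> obar Ag Obj R P Oc"
  using obar_iff by fast

lemma L_sub: "layerL Ag Obj R P Oc k \<subseteq> Ag"
  by (cases k) (auto simp: lab0 labS(1))

lemma obar_sub: "Oc \<subseteq> Obj \<Longrightarrow> obar Ag Obj R P Oc \<subseteq> Obj"
proof
  fix x assume "Oc \<subseteq> Obj" "x \<in> obar Ag Obj R P Oc"
  then obtain j where "x \<in> layerT Ag Obj R P Oc j" using obar_iff TU_T by metis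
  then show "x \<in> Obj" using \<open>Oc \<subseteq> Obj\<close> by (cases j) (auto simp: lab0 labS(2))
qed

lemma otil_agent_sub: "otil_agent Ag Obj R P Oc i \<subseteq> obar Ag Obj R P Oc"
proof
  fix x assume "x \<in> otil_agent Ag Obj R P Oc i"
  then obtain k where k: "i \<in> layerL Ag Obj R P Oc (Suc k)" "x \<in> otil_lvl Ag Obj R P Oc k i"
    unfolding otil_agent_def by (auto split: if_splits)
  then have "x \<in> layerT Ag Obj R P Oc (Suc k)" by (auto simp: labS)
  then show "x \<in> obar Ag Obj R P Oc" using T_sub_obar[of Ag Obj R P Oc "Suc k"] by blast
qed


lemma T_in_obar: "x \<in> layerT Ag Obj R P Oc k \<Longrightarrow> x \<in> obar Ag Obj R P Oc"
  using T_sub_obar by (metis subsetD)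
lemma TU_in_obar: "x \<in> TUf Ag Obj R P Oc k \<Longrightarrow> x \<in> obar Ag Obj R P Oc"
  using TU_sub_obar by (metis subsetD)
lemma L_in: "i \<in> layerL Ag Obj R P Oc k \<Longrightarrow> i \<in> Ag"
  using L_sub by (metis subsetD)
lemma T_in_TU: "x \<in> layerT Ag Obj R P Oc k \<Longrightarrow> x \<in> TUf Ag Obj R P Oc k"
  using T_sub_TU by (metis subsetD)

definition Ainv where
  "Ainv Ag Obj R P Oc \<longleftrightarrow> (\<forall>i\<in>Ag. \<forall>ob\<in>Obj. P i ob > 0 \<longrightarrow> (\<forall>x\<in>obar Ag Obj R P Oc. R i ob x))"

lemma step_P:
  assumes st: "fttc_step Ag Obj R W P Oc lam beta gam xa xo W' P' Oc'"
    and i: "i \<in> Ag" and o: "ob \<in> Obj" and pos: "P' i ob > 0"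
  shows "P i ob > 0 \<or> ob \<in> pointA Ag Obj R P Oc i"
proof -
  let ?Ob = "obar Ag Obj R P Oc" and ?Ia = "active Ag Obj R W P Oc"
  have lam: "\<forall>i\<in>?Ia. \<forall>ob\<in>?Ob. lam i ob \<ge> 0"
    and gp: "\<forall>i\<in>?Ia. \<forall>ob\<in>?Ob. gam i ob > 0 \<longrightarrow> ob \<in> pointA Ag Obj R P Oc i"
    and tm: "trade_max ?Ia ?Ob Oc (otil Ag Obj R P Oc) lam beta gam P xa xo"
    and Pe: "\<forall>i\<in>Ag. \<forall>ob\<in>Obj. P' i ob =
        (if i \<in> ?Ia then
           P i ob - (if ob \<in> otil_agent Ag Obj R P Oc i then lam i ob * xo ob else 0)
                 + (if ob \<in> ?Ob then gam i ob * xa i else 0)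
         else P i ob)"
    using st unfolding fttc_step_def Let_def by blast+
  have xo: "\<forall>ob\<in>?Ob. xo ob \<ge> 0" and xa: "\<forall>i\<in>?Ia. xa i \<ge> 0"
    using tm unfolding trade_max_def trade_feasible_def by blast+
  show ?thesis
  proof (cases "i \<in> ?Ia")
    case False then show ?thesis using Pe i o pos by auto
  next
    case True
    show ?thesis
    proof (cases "ob \<in> ?Ob \<and> gam i ob > 0")
      case True then show ?thesis using gp \<open>i \<in> ?Ia\<close> by blast
    next
      case ng: False
      have g: "(if ob \<in> ?Ob then gam i ob * xa i else 0) \<le> 0"
        using ng xa True by (auto intro: mult_nonpos_nonneg)
      have l: "(if ob \<in> otil_agent Ag Obj R P Oc i then lam i ob * xo ob else 0) \<ge> 0"
        using otil_agent_sub[of Ag Obj R P Oc i] lam xo True by auto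
      have "P' i ob \<le> P i ob" using Pe i o True g l by simp
      then show ?thesis using pos by simp
    qed
  qed
qed

lemma step_Psame:
  assumes st: "fttc_step Ag Obj R W P Oc lam beta gam xa xo W' P' Oc'"
    and i: "i \<in> Ag" and o: "ob \<in> Obj" and nob: "ob \<notin> obar Ag Obj R P Oc"
  shows "P' i ob = P i ob"
proof -
  let ?Ob = "obar Ag Obj R P Oc" and ?Ia = "active Ag Obj R W P Oc"
  have Pe: "\<forall>i\<in>Ag. \<forall>ob\<in>Obj. P' i ob =
        (if i \<in> ?Ia then
           P i ob - (if ob \<in> otil_agent Ag Obj R P Oc i then lam i ob * xo ob else 0)
                 + (if ob \<in> ?Ob then gam i ob * xa i else 0)
         else P i ob)"
    using st unfolding fttc_step_def Let_def by blast+
  then show ?thesis using i o nob otil_agent_sub[of Ag Obj R P Oc i] by auto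
qed

lemma step_Oc:
  assumes st: "fttc_step Ag Obj R W P Oc lam beta gam xa xo W' P' Oc'"
  shows "Oc' \<subseteq> Oc"
  using st unfolding fttc_step_def Let_def by blast

lemma step_incl:
  assumes pref: "\<forall>i\<in>Ag. \<forall>a\<in>Obj. \<forall>b\<in>Obj. \<forall>c\<in>Obj. R i a b \<longrightarrow> R i b c \<longrightarrow> R i a c"
    and st: "fttc_step Ag Obj R W P Oc lam beta gam xa xo W' P' Oc'"
    and OcO: "Oc \<subseteq> Obj"
    and A: "Ainv Ag Obj R P Oc"
  shows "obar Ag Obj R P' Oc' \<subseteq> obar Ag Obj R P Oc"
proof -
  let ?Ob = "obar Ag Obj R P Oc"
  have obO: "?Ob \<subseteq> Obj" using obar_sub[OF OcO] by blast
  have key: "TUf Ag Obj R P' Oc' k \<subseteq> ?Ob" for k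
  proof (induction k)
    case 0 then show ?case using step_Oc[OF st] lab0(4)[of Ag Obj R P Oc] TU_sub_obar[of Ag Obj R P Oc 0]
      by (simp add: lab0)
  next
    case (Suc k)
    have "x \<in> ?Ob" if x: "x \<in> layerT Ag Obj R P' Oc' (Suc k)" for x
    proof (rule ccontr)
      assume nx: "x \<notin> ?Ob"
      from x obtain i ob where i: "i \<in> layerL Ag Obj R P' Oc' (Suc k)" and xO: "x \<in> Obj"
        and Px: "P' i x > 0" and ob: "ob \<in> layerT Ag Obj R P' Oc' k" and ind: "indiff R i ob x"
        unfolding labS(2) by blast
      have iA: "i \<in> Ag" using L_in[OF i] .
      have obO': "ob \<in> ?Ob" using T_in_TU[OF ob] Suc.IH by blast
      have Px0: "P i x > 0" using Px step_Psame[OF st iA xO nx] by simp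
      obtain m where m: "ob \<in> layerT Ag Obj R P Oc m"
        using obO' obar_iff TU_T by metis
      have xnTU: "x \<notin> TUf Ag Obj R P Oc j" for j using nx TU_in_obar by metis
      show False
      proof (cases "i \<in> LUf Ag Obj R P Oc m")
        case False
        have xx: "x \<in> Obj - TUf Ag Obj R P Oc m" using xO xnTU by blast
        have "i \<in> layerL Ag Obj R P Oc (Suc m)"
          unfolding labS(1) using iA False m xx Px0 ind by blast
        then have "x \<in> layerT Ag Obj R P Oc (Suc m)"
          unfolding labS(2) using xx Px0 ind m by blast
        then show False using nx T_in_obar by metis
      next
        case True
        then obtain j where j: "i \<in> layerL Ag Obj R P Oc (Suc j)" using LU_L by metis
        then obtain o1 t where o1: "o1 \<in> layerT Ag Obj R P Oc j" and t: "t \<in> Obj - TUf Ag Obj R P Oc j"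
          and Pt: "P i t > 0" and ind1: "indiff R i o1 t"
          unfolding labS(1) by blast
        have tT: "t \<in> layerT Ag Obj R P Oc (Suc j)" unfolding labS(2) using j t Pt ind1 o1 by blast
        have tOb: "t \<in> ?Ob" using T_in_obar[OF tT] .
        have o1Ob: "o1 \<in> ?Ob" using T_in_obar[OF o1] .
        have R1: "R i x t" using A iA xO Px0 tOb unfolding Ainv_def by blast
        have R2: "R i t ob" using A iA t Pt obO' unfolding Ainv_def by blast
        have R3: "R i ob x" using ind unfolding indiff_def by blast
        have tO: "t \<in> Obj" and o1O: "o1 \<in> Obj" and obOO: "ob \<in> Obj"
          using tOb o1Ob obO' obO by blast+
        have tr: "\<And>a b c. a \<in> Obj \<Longrightarrow> b \<in> Obj \<Longrightarrow> c \<in> Obj \<Longrightarrow> R i a b \<Longrightarrow> R i b c \<Longrightarrow> R i a c"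
          using pref iA by blast
        have R4: "R i t x" using tr[OF tO obOO xO R2 R3] .
        have R5: "R i o1 t" "R i t o1" using ind1 unfolding indiff_def by blast+
        have "indiff R i o1 x"
          unfolding indiff_def using tr[OF o1O tO xO R5(1) R4] tr[OF xO tO o1O R1 R5(2)] by blast
        moreover have xx: "x \<in> Obj - TUf Ag Obj R P Oc j" using xO xnTU by blast
        ultimately have "x \<in> layerT Ag Obj R P Oc (Suc j)"
          unfolding labS(2) using j Px0 o1 by blast
        then show False using nx T_in_obar by metis
      qed
    qed
    then show ?case using Suc.IH by (auto simp: labS(4))
  qed
  show ?thesis
  proof
    fix x assume "x \<in> obar Ag Obj R P' Oc'"
    then obtain k where "x \<in> TUf Ag Obj R P' Oc' k" unfolding obar_iff by blast
    then show "x \<in> ?Ob" using key by blast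
  qed
qed

lemma step_A:
  assumes pref: "\<forall>i\<in>Ag. \<forall>a\<in>Obj. \<forall>b\<in>Obj. \<forall>c\<in>Obj. R i a b \<longrightarrow> R i b c \<longrightarrow> R i a c"
    and st: "fttc_step Ag Obj R W P Oc lam beta gam xa xo W' P' Oc'"
    and OcO: "Oc \<subseteq> Obj"
    and A: "Ainv Ag Obj R P Oc"
  shows "Ainv Ag Obj R P' Oc'"
  unfolding Ainv_def
proof (intro ballI impI)
  fix i ob x assume i: "i \<in> Ag" and o: "ob \<in> Obj" and pos: "P' i ob > 0"
    and x: "x \<in> obar Ag Obj R P' Oc'"
  have x': "x \<in> obar Ag Obj R P Oc" using step_incl[OF pref st OcO A] x by blast
  from step_P[OF st i o pos] show "R i ob x"
  proof
    assume "P i ob > 0" then show ?thesis using A i o x' unfolding Ainv_def by blast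
  next
    assume "ob \<in> pointA Ag Obj R P Oc i"
    then show ?thesis using x' unfolding pointA_def maxset_def Let_def by blast
  qed
qed

theorem lemma1:
  fixes Ag :: "'i set" and Obj :: "'o set" and R :: "'i \<Rightarrow> 'o \<Rightarrow> 'o \<Rightarrow> bool"
    and \<omega> :: "'i \<Rightarrow> 'o \<Rightarrow> real"
    and W P :: "nat \<Rightarrow> 'i \<Rightarrow> 'o \<Rightarrow> real" and Oseq :: "nat \<Rightarrow> 'o set"
    and lam beta gam :: "nat \<Rightarrow> 'i \<Rightarrow> 'o \<Rightarrow> real"
    and xa :: "nat \<Rightarrow> 'i \<Rightarrow> real" and xo :: "nat \<Rightarrow> 'o \<Rightarrow> real"
    and d :: nat
  assumes "fee_problem Ag Obj R \<omega>"
    and "fttc_run Ag Obj R \<omega> W P Oseq lam beta gam xa xo"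
    and "d \<ge> 1"
    and "Oseq d \<noteq> {}"
  shows "obar Ag Obj R (P d) (Oseq d) \<subseteq> obar Ag Obj R (P (d - 1)) (Oseq (d - 1))"
proof -
  have pref: "\<forall>i\<in>Ag. \<forall>a\<in>Obj. \<forall>b\<in>Obj. \<forall>c\<in>Obj. R i a b \<longrightarrow> R i b c \<longrightarrow> R i a c"
    using assms(1) unfolding fee_problem_def by blast
  have run: "W 0 = \<omega>" "P 0 = (\<lambda>_ _. 0)" "Oseq 0 = Obj"
    "\<And>d. Oseq d \<noteq> {} \<Longrightarrow>
        fttc_step Ag Obj R (W d) (P d) (Oseq d) (lam (Suc d)) (beta (Suc d)) (gam (Suc d))
          (xa (Suc d)) (xo (Suc d)) (W (Suc d)) (P (Suc d)) (Oseq (Suc d))"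
    "\<And>d. Oseq d = {} \<Longrightarrow> Oseq (Suc d) = {}"
    using assms(2) unfolding fttc_run_def by blast+
  have inv: "Oseq n \<subseteq> Obj \<and> (Oseq n \<noteq> {} \<longrightarrow> Ainv Ag Obj R (P n) (Oseq n))" for n
  proof (induction n)
    case 0 then show ?case using run by (simp add: Ainv_def)
  next
    case (Suc n)
    show ?case
    proof (cases "Oseq n = {}")
      case True then show ?thesis using run(5) by simp
    next
      case False
      note st = run(4)[OF False]
      show ?thesis using Suc.IH False step_Oc[OF st] step_A[OF pref st] by blast
    qed
  qed
  obtain D where D: "d = Suc D" using assms(3) by (cases d) auto
  have ne: "Oseq D \<noteq> {}" using assms(4) run(5) D by blast
  show ?thesis using step_incl[OF pref run(4)[OF ne]] inv[of D] ne D by simp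
qed

end
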